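(* Let $f:\mathbb R^n\to\mathbb R$ be continuously differentiable, $A\in\mathbb R^{q\times n}$, $b\in\mathbb R^q$, and $c=(c_1,\dots,c_p):\mathbb R^n\to\mathbb R^p$ with each $c_i$ concave and twice continuously differentiable. For each $\varepsilon>0$ let $(x(\varepsilon),y(\varepsilon),z^I(\varepsilon))\in\mathbb R^{n+q+2p}$ be a stationary point of $\mathrm P_\varepsilon$ with multiplier $\lambda(\varepsilon)\in\mathbb R^n$. Let $(x^*,y^*,[z^I]^*,\lambda^* )$ be any point of $\limsup_{\varepsilon\searrow0}\{(x(\varepsilon),y(\varepsilon),z^I(\varepsilon),\lambda(\varepsilon))\}$, and let $\beta=\{i:[y^I]^*_i=0=[z^I]^*_i\}$, $\gamma=\{i:[y^I]^*_i>0=[z^I]^*_i\}$. Then there exists $\eta_\beta\in[0,1]^{|\beta|}$ such that $$\nabla f(x^* )+\Big[\sum_{j=1}^p[y^I]^*_j\nabla^2c_j(x^* )-A^TA-\mathcal Jc_\gamma(x^* )^T\mathcal Jc_\gamma(x^* )-\mathcal Jc_\beta(x^* )^T\mathrm{Diag}(\eta_\beta)\mathcal Jc_\beta(x^* )\Big]\lambda^*=0.$$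
   Context: $\mathcal Jc(x)$ is the $p\times n$ Jacobian of $c$; for an index set $\beta$, $c_\beta=(c_i)_{i\in\beta}$ with Jacobian $\mathcal Jc_\beta$. $G(x,y,z^I)=\big(A^Ty^E+\mathcal Jc(x)^Ty^I,\ Ax-b+y^E,\ c(x)+y^I-z^I\big)$, $y=(y^E,y^I)\in\mathbb R^q\times\mathbb R^p$. $\psi_\varepsilon(a,b)=a+b-\sqrt{a^2+b^2+2\varepsilon^2}$, $\Psi_\varepsilon(y^I,z^I)=(\psi_\varepsilon(y^I_i,z^I_i))_{i=1}^p$, $\Theta(\varepsilon)=\{(y^I,z^I):\Psi_\varepsilon(y^I,z^I)=0\}$, and $\mathcal J_{z^I}\Psi_\varepsilon(y^I,z^I)=\mathrm{Diag}\big(1-z^I_i/\sqrt{(y^I_i)^2+(z^I_i)^2+2\varepsilon^2}\big)$. Problem $\mathrm P_\varepsilon$ is $\min f(x)$ s.t. $G(x,y,z^I)=0$, $(y^I,z^I)\in\Theta(\varepsilon)$. A feasible point $(x,y,z^I)$ of $\mathrm P_\varepsilon$ is a stationary point of $\mathrm P_\varepsilon$ with multiplier $\lambda\in\mathbb R^n$ if $\nabla f(x)+\big[\sum_{i=1}^p y^I_i\nabla^2c_i(x)-A^TA-\mathcal Jc(x)^T\mathcal J_{z^I}\Psi_\varepsilon(y^I,z^I)\mathcal Jc(x)\big]\lambda=0$. $\mathrm{Diag}(v)$ is the diagonal matrix with diagonal $v$. *)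

theory Defs
  imports "HOL-Analysis.Analysis"
begin

definition jac :: "(real^'n \<Rightarrow> real^'m) \<Rightarrow> real^'n \<Rightarrow> real^'n^'m" where
  "jac F x = (\<chi> i j. frechet_derivative (\<lambda>y. F y $ i) (at x) (axis j 1))"

definition grad :: "(real^'n \<Rightarrow> real) \<Rightarrow> real^'n \<Rightarrow> real^'n" where
  "grad g x = (\<chi> j. frechet_derivative g (at x) (axis j 1))"

definition hess :: "(real^'n \<Rightarrow> real) \<Rightarrow> real^'n \<Rightarrow> real^'n^'n" where
  "hess g x = jac (grad g) x"

definition Diag :: "real^'p \<Rightarrow> real^'p^'p" where
  "Diag v = (\<chi> i j. if i = j then v $ i else 0)"

text \<open>Rows of M indexed by S, other rows set to zero; so
  (rowsub S M)^T ** N ** rowsub S M equals M_S^T N_S M_S for the submatrix M_S.\<close>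
definition rowsub :: "'p set \<Rightarrow> real^'n^'p \<Rightarrow> real^'n^'p" where
  "rowsub S M = (\<chi> i j. if i \<in> S then M $ i $ j else 0)"

definition psi :: "real \<Rightarrow> real \<Rightarrow> real \<Rightarrow> real" where
  "psi e a b = a + b - sqrt (a\<^sup>2 + b\<^sup>2 + 2 * e\<^sup>2)"

text \<open>Diagonal entries of J_{z^I} Psi_eps(y^I,z^I).\<close>
definition dPsi_z :: "real \<Rightarrow> real^'p \<Rightarrow> real^'p \<Rightarrow> real^'p" where
  "dPsi_z e yI zI = (\<chi> i. 1 - zI $ i / sqrt ((yI $ i)\<^sup>2 + (zI $ i)\<^sup>2 + 2 * e\<^sup>2))"

definition feasible_P ::
  "real \<Rightarrow> real^'n^'q \<Rightarrow> real^'q \<Rightarrow> (real^'n \<Rightarrow> real^'p)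
   \<Rightarrow> real^'n \<Rightarrow> real^'q \<Rightarrow> real^'p \<Rightarrow> real^'p \<Rightarrow> bool" where
  "feasible_P e A b c x yE yI zI \<longleftrightarrow>
     transpose A *v yE + transpose (jac c x) *v yI = 0 \<and>
     A *v x - b + yE = 0 \<and>
     c x + yI - zI = 0 \<and>
     (\<forall>i. psi e (yI $ i) (zI $ i) = 0)"

definition stationary_P ::
  "real \<Rightarrow> (real^'n \<Rightarrow> real) \<Rightarrow> real^'n^'q \<Rightarrow> real^'q \<Rightarrow> (real^'n \<Rightarrow> real^'p)
   \<Rightarrow> real^'n \<Rightarrow> real^'q \<Rightarrow> real^'p \<Rightarrow> real^'p \<Rightarrow> real^'n \<Rightarrow> bool" where
  "stationary_P e f A b c x yE yI zI lam \<longleftrightarrow>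
     feasible_P e A b c x yE yI zI \<and>
     grad f x + ((\<Sum>i\<in>UNIV. yI $ i *\<^sub>R hess (\<lambda>u. c u $ i) x)
                 - transpose A ** A
                 - transpose (jac c x) ** Diag (dPsi_z e yI zI) ** jac c x) *v lam = 0"

end

theory Submission imports Defs begin

lemma tendsto_mv:
  fixes M :: "nat \<Rightarrow> real^'n^'m"
  assumes "M \<longlonglongrightarrow> M0" "v \<longlonglongrightarrow> v0"
  shows "(\<lambda>k. M k *v v k) \<longlonglongrightarrow> M0 *v v0"
  unfolding matrix_vector_mult_def
  by (intro vec_tendstoI) (simp, intro tendsto_sum tendsto_mult tendsto_vec_nth assms)

lemma tendsto_mm:
  fixes M :: "nat \<Rightarrow> real^'n^'m" and N :: "nat \<Rightarrow> real^'k^'n"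
  assumes "M \<longlonglongrightarrow> M0" "N \<longlonglongrightarrow> N0"
  shows "(\<lambda>k. M k ** N k) \<longlonglongrightarrow> M0 ** N0"
  unfolding matrix_matrix_mult_def
  apply (rule vec_tendstoI)+ apply simp by (intro tendsto_sum tendsto_mult tendsto_vec_nth assms)

lemma tendsto_transp:
  fixes M :: "nat \<Rightarrow> real^'n^'m"
  assumes "M \<longlonglongrightarrow> M0"
  shows "(\<lambda>k. transpose (M k)) \<longlonglongrightarrow> transpose M0"
  unfolding transpose_def
  apply (rule vec_tendstoI)+ apply simp by (intro tendsto_vec_nth assms)

lemma tendsto_Diag:
  fixes M :: "nat \<Rightarrow> real^'n"
  assumes "M \<longlonglongrightarrow> M0"
  shows "(\<lambda>k. Diag (M k)) \<longlonglongrightarrow> Diag M0"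
  unfolding Diag_def
  apply (rule vec_tendstoI)+ apply simp by (auto intro: tendsto_vec_nth assms)

lemma psi_zero:
  assumes "e > 0" "psi e y z = 0"
  shows "y > 0 \<and> z > 0 \<and> y * z = e\<^sup>2 \<and> sqrt (y\<^sup>2 + z\<^sup>2 + 2 * e\<^sup>2) = y + z"
proof -
  have s: "sqrt (y\<^sup>2 + z\<^sup>2 + 2 * e\<^sup>2) = y + z" using assms(2) by (simp add: psi_def)
  have "y + z \<ge> 0" using s[symmetric] by simp
  have "(y+z)\<^sup>2 = y\<^sup>2 + z\<^sup>2 + 2 * e\<^sup>2" using s[symmetric] by (simp add: add_nonneg_nonneg)
  hence p: "y * z = e\<^sup>2" by (simp add: power2_eq_square algebra_simps)
  have "e\<^sup>2 > 0" using assms(1) by simp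
  hence "y * z > 0" using p by simp
  hence "y > 0 \<and> z > 0" using \<open>y + z \<ge> 0\<close> by (smt (verit) mult_nonneg_nonpos mult_nonpos_nonneg zero_less_mult_iff)
  thus ?thesis using p s by simp
qed

lemma jac_row: "jac c x $ i = grad (\<lambda>v. c v $ i) x"
  by (simp add: jac_def grad_def vec_eq_iff)

lemma tDiag_entry: "(transpose M ** Diag v ** N) $ a $ b = (\<Sum>i\<in>UNIV. M$i$a * v$i * N$i$b)"
  by (simp add: matrix_matrix_mult_def transpose_def Diag_def if_distrib cong: if_cong)

lemma tprod_entry: "(transpose M ** N) $ a $ b = (\<Sum>i\<in>UNIV. M$i$a * N$i$b)"
  by (simp add: matrix_matrix_mult_def transpose_def)

lemma split_mat:
  fixes J :: "real^'n^'p"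
  assumes g: "\<And>i. i \<in> G \<Longrightarrow> v $ i = 1" and o: "\<And>i. i \<notin> B \<Longrightarrow> i \<notin> G \<Longrightarrow> v $ i = 0"
    and d: "B \<inter> G = {}"
  shows "transpose J ** Diag v ** J = transpose (rowsub G J) ** rowsub G J + transpose (rowsub B J) ** Diag v ** rowsub B J"
proof -
  have "\<And>a b. (\<Sum>i\<in>UNIV. J$i$a * v$i * J$i$b) = (\<Sum>i\<in>UNIV. rowsub G J$i$a * rowsub G J$i$b) + (\<Sum>i\<in>UNIV. rowsub B J$i$a * v$i * rowsub B J$i$b)"
  proof -
    fix a b
    show "(\<Sum>i\<in>UNIV. J$i$a * v$i * J$i$b) = (\<Sum>i\<in>UNIV. rowsub G J$i$a * rowsub G J$i$b) + (\<Sum>i\<in>UNIV. rowsub B J$i$a * v$i * rowsub B J$i$b)"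
      unfolding sum.distrib[symmetric]
    proof (rule sum.cong[OF refl])
      fix i
      show "J$i$a * v$i * J$i$b = rowsub G J$i$a * rowsub G J$i$b + rowsub B J$i$a * v$i * rowsub B J$i$b"
        using g[of i] o[of i] d by (auto simp: rowsub_def)
    qed
  qed
  thus ?thesis by (simp add: vec_eq_iff tDiag_entry tprod_entry)
qed

theorem theorem4p2:
  fixes f :: "real^'n \<Rightarrow> real"
    and A :: "real^'n^'q" and b :: "real^'q"
    and c :: "real^'n \<Rightarrow> real^'p"
    and x :: "real \<Rightarrow> real^'n" and yE :: "real \<Rightarrow> real^'q"
    and yI zI :: "real \<Rightarrow> real^'p" and lam :: "real \<Rightarrow> real^'n"
    and xs :: "real^'n" and yEs :: "real^'q" and yIs zIs :: "real^'p" and lams :: "real^'n"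
  assumes f_diff: "\<And>u. f differentiable (at u)"
    and f_C1: "continuous_on UNIV (grad f)"
    and c_concave: "\<And>i. concave_on UNIV (\<lambda>u. c u $ i)"
    and c_diff: "\<And>i u. (\<lambda>v. c v $ i) differentiable (at u)"
    and c_diff2: "\<And>i u. grad (\<lambda>v. c v $ i) differentiable (at u)"
    and c_C2: "\<And>i. continuous_on UNIV (hess (\<lambda>v. c v $ i))"
    and stat: "\<And>e. e > 0 \<Longrightarrow> stationary_P e f A b c (x e) (yE e) (yI e) (zI e) (lam e)"
    and limsup: "\<exists>ep :: nat \<Rightarrow> real. (\<forall>k. ep k > 0) \<and> ep \<longlonglongrightarrow> 0 \<and>
        (\<lambda>k. x (ep k)) \<longlonglongrightarrow> xs \<and> (\<lambda>k. yE (ep k)) \<longlonglongrightarrow> yEs \<and>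
        (\<lambda>k. yI (ep k)) \<longlonglongrightarrow> yIs \<and> (\<lambda>k. zI (ep k)) \<longlonglongrightarrow> zIs \<and>
        (\<lambda>k. lam (ep k)) \<longlonglongrightarrow> lams"
  defines "\<beta> \<equiv> {i. yIs $ i = 0 \<and> zIs $ i = 0}"
    and "\<gamma> \<equiv> {i. yIs $ i > 0 \<and> zIs $ i = 0}"
  shows "\<exists>\<eta> :: real^'p. (\<forall>i. 0 \<le> \<eta> $ i \<and> \<eta> $ i \<le> 1) \<and>
     grad f xs + ((\<Sum>j\<in>UNIV. yIs $ j *\<^sub>R hess (\<lambda>u. c u $ j) xs)
        - transpose A ** A
        - transpose (rowsub \<gamma> (jac c xs)) ** rowsub \<gamma> (jac c xs)
        - transpose (rowsub \<beta> (jac c xs)) ** Diag \<eta> ** rowsub \<beta> (jac c xs)) *v lams = 0"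
proof -
  obtain ep :: "nat \<Rightarrow> real" where ep: "\<forall>k. ep k > 0" "ep \<longlonglongrightarrow> 0"
    "(\<lambda>k. x (ep k)) \<longlonglongrightarrow> xs" "(\<lambda>k. yI (ep k)) \<longlonglongrightarrow> yIs" "(\<lambda>k. zI (ep k)) \<longlonglongrightarrow> zIs"
    "(\<lambda>k. lam (ep k)) \<longlonglongrightarrow> lams"
    using limsup by blast
  define d where "d k = dPsi_z (ep k) (yI (ep k)) (zI (ep k))" for k
  have feas: "yI (ep k) $ i > 0 \<and> zI (ep k) $ i > 0 \<and> yI (ep k) $ i * zI (ep k) $ i = (ep k)\<^sup>2 \<and>
     sqrt ((yI (ep k) $ i)\<^sup>2 + (zI (ep k) $ i)\<^sup>2 + 2 * (ep k)\<^sup>2) = yI (ep k) $ i + zI (ep k) $ i" for k i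
  proof -
    have "psi (ep k) (yI (ep k) $ i) (zI (ep k) $ i) = 0"
      using stat[of "ep k"] ep(1) by (simp add: stationary_P_def feasible_P_def)
    thus ?thesis using psi_zero ep(1) by blast
  qed
  have dform: "d k $ i = yI (ep k) $ i / (yI (ep k) $ i + zI (ep k) $ i)" for k i
  proof -
    have "yI (ep k) $ i + zI (ep k) $ i > 0" using feas[of k i] by simp
    thus ?thesis using feas[of k i] by (simp add: d_def dPsi_z_def field_simps)
  qed
  have dbnd: "d k \<in> cbox 0 1" for k
    unfolding mem_box_cart
  proof (intro allI conjI)
    fix i
    have p: "yI (ep k) $ i > 0" "zI (ep k) $ i > 0" using feas[of k i] by auto
    show "(0::real^'p) $ i \<le> d k $ i" using p by (simp add: dform)
    show "d k $ i \<le> (1::real^'p) $ i" using p by (simp add: dform)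
  qed
  obtain \<eta> r where eta: "\<eta> \<in> cbox 0 1" "strict_mono r" "(d \<circ> r) \<longlonglongrightarrow> \<eta>"
    using compact_imp_seq_compact[OF compact_cbox[of "0::real^'p" 1]] dbnd
    unfolding seq_compact_def by meson
  define X where "X = (\<lambda>k. x (ep (r k)))"
  define Y where "Y = (\<lambda>k. yI (ep (r k)))"
  define Z where "Z = (\<lambda>k. zI (ep (r k)))"
  define L where "L = (\<lambda>k. lam (ep (r k)))"
  have XL: "X \<longlonglongrightarrow> xs" using LIMSEQ_subseq_LIMSEQ[OF ep(3) eta(2)] by (simp add: X_def o_def)
  have YL: "Y \<longlonglongrightarrow> yIs" using LIMSEQ_subseq_LIMSEQ[OF ep(4) eta(2)] by (simp add: Y_def o_def)
  have ZL: "Z \<longlonglongrightarrow> zIs" using LIMSEQ_subseq_LIMSEQ[OF ep(5) eta(2)] by (simp add: Z_def o_def)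
  have LL: "L \<longlonglongrightarrow> lams" using LIMSEQ_subseq_LIMSEQ[OF ep(6) eta(2)] by (simp add: L_def o_def)
  have DL: "(\<lambda>k. d (r k)) \<longlonglongrightarrow> \<eta>" using eta(3) by (simp add: o_def)
  define E where "E X Y D L = grad f X + ((\<Sum>j\<in>UNIV. Y $ j *\<^sub>R hess (\<lambda>u. c u $ j) X)
                 - transpose A ** A
                 - transpose (jac c X) ** Diag D ** jac c X) *v L" for X Y D L
  have zero: "E (X k) (Y k) (d (r k)) (L k) = 0" for k
    using stat[of "ep (r k)"] ep(1) by (simp add: stationary_P_def E_def X_def Y_def L_def d_def)
  have gf: "(\<lambda>k. grad f (X k)) \<longlonglongrightarrow> grad f xs"
    using f_C1 XL by (metis continuous_on_eq_continuous_at isCont_tendsto_compose open_UNIV UNIV_I)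
  have hc: "(\<lambda>k. hess (\<lambda>u. c u $ j) (X k)) \<longlonglongrightarrow> hess (\<lambda>u. c u $ j) xs" for j
    using c_C2[of j] XL by (metis continuous_on_eq_continuous_at isCont_tendsto_compose open_UNIV UNIV_I)
  have jc: "(\<lambda>k. jac c (X k)) \<longlonglongrightarrow> jac c xs"
  proof (rule vec_tendstoI)
    fix i
    have "isCont (grad (\<lambda>v. c v $ i)) xs"
      using c_diff2 differentiable_imp_continuous_within by blast
    thus "(\<lambda>k. jac c (X k) $ i) \<longlonglongrightarrow> jac c xs $ i"
      unfolding jac_row using XL isCont_tendsto_compose by blast
  qed
  have lim: "(\<lambda>k. E (X k) (Y k) (d (r k)) (L k)) \<longlonglongrightarrow> E xs yIs \<eta> lams"
    unfolding E_def
    by (intro tendsto_add gf tendsto_mv tendsto_diff tendsto_sum tendsto_scaleR tendsto_vec_nth YL hc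
          tendsto_const tendsto_mm tendsto_transp jc tendsto_Diag DL LL)
  have E0: "E xs yIs \<eta> lams = 0"
    using LIMSEQ_unique[OF lim] zero by simp
  have Ypos: "\<And>k i. Y k $ i > 0" and Zpos: "\<And>k i. Z k $ i > 0"
    using feas by (auto simp: Y_def Z_def)
  have yge: "yIs $ i \<ge> 0" for i
    by (rule LIMSEQ_le_const[OF tendsto_vec_nth[OF YL]]) (auto intro: less_imp_le Ypos)
  have zge: "zIs $ i \<ge> 0" for i
    by (rule LIMSEQ_le_const[OF tendsto_vec_nth[OF ZL]]) (auto intro: less_imp_le Zpos)
  have prod0: "yIs $ i * zIs $ i = 0" for i
  proof -
    have "(\<lambda>k. Y k $ i * Z k $ i) \<longlonglongrightarrow> yIs $ i * zIs $ i"
      by (intro tendsto_mult tendsto_vec_nth YL ZL)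
    moreover have "(\<lambda>k. Y k $ i * Z k $ i) = (\<lambda>k. (ep (r k))\<^sup>2)"
      using feas by (auto simp: Y_def Z_def)
    moreover have "(\<lambda>k. (ep (r k))\<^sup>2) \<longlonglongrightarrow> 0"
      using tendsto_power[OF LIMSEQ_subseq_LIMSEQ[OF ep(2) eta(2)], of 2] by (simp add: o_def)
    ultimately show ?thesis using LIMSEQ_unique by metis
  qed
  have dr: "d (r k) $ i = Y k $ i / (Y k $ i + Z k $ i)" for k i
    by (simp add: dform Y_def Z_def)
  have etalim: "(\<lambda>k. Y k $ i / (Y k $ i + Z k $ i)) \<longlonglongrightarrow> \<eta> $ i" for i
    using tendsto_vec_nth[OF DL, of i] by (simp add: dr)
  have g1: "\<eta> $ i = 1" if "i \<in> \<gamma>" for i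
  proof -
    have "(\<lambda>k. Y k $ i / (Y k $ i + Z k $ i)) \<longlonglongrightarrow> yIs $ i / (yIs $ i + zIs $ i)"
      using that by (intro tendsto_divide tendsto_add tendsto_vec_nth YL ZL) (auto simp: \<gamma>_def)
    hence "\<eta> $ i = yIs $ i / (yIs $ i + zIs $ i)" using LIMSEQ_unique etalim by blast
    thus ?thesis using that by (simp add: \<gamma>_def)
  qed
  have o0: "\<eta> $ i = 0" if "i \<notin> \<beta>" "i \<notin> \<gamma>" for i
  proof -
    have yz: "yIs $ i = 0" "zIs $ i > 0"
      using that yge[of i] zge[of i] prod0[of i] by (auto simp: \<beta>_def \<gamma>_def)
    have "(\<lambda>k. Y k $ i / (Y k $ i + Z k $ i)) \<longlonglongrightarrow> yIs $ i / (yIs $ i + zIs $ i)"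
      using yz by (intro tendsto_divide tendsto_add tendsto_vec_nth YL ZL) auto
    hence "\<eta> $ i = yIs $ i / (yIs $ i + zIs $ i)" using LIMSEQ_unique etalim by blast
    thus ?thesis using yz by simp
  qed
  have dj: "\<beta> \<inter> \<gamma> = {}" by (auto simp: \<beta>_def \<gamma>_def)
  have split: "transpose (jac c xs) ** Diag \<eta> ** jac c xs =
     transpose (rowsub \<gamma> (jac c xs)) ** rowsub \<gamma> (jac c xs) + transpose (rowsub \<beta> (jac c xs)) ** Diag \<eta> ** rowsub \<beta> (jac c xs)"
    by (rule split_mat[OF g1 o0 dj])
  have "\<forall>i. 0 \<le> \<eta> $ i \<and> \<eta> $ i \<le> 1" using eta(1) unfolding mem_box_cart by simp
  moreover have "grad f xs + ((\<Sum>j\<in>UNIV. yIs $ j *\<^sub>R hess (\<lambda>u. c u $ j) xs)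
        - transpose A ** A
        - transpose (rowsub \<gamma> (jac c xs)) ** rowsub \<gamma> (jac c xs)
        - transpose (rowsub \<beta> (jac c xs)) ** Diag \<eta> ** rowsub \<beta> (jac c xs)) *v lams = 0"
    using E0 unfolding E_def split by (simp add: diff_diff_eq add.assoc)
  ultimately show ?thesis by blast
qed

end
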